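(* Let $\phi_S(t)=t/\sinh t$ (the hyperbolic-sine characteristic function), whose Khintchine pair is $[0,m_S]$ with $m_S(dx)=\frac{|x|}{1+x^2}\frac{1}{1-e^{-\pi|x|}}\cdot e^{-\pi|x|}\cdot\frac{1}{1}\,dx$, i.e. $m_S(dx)=\frac12\frac{|x|}{1+x^2}\frac{e^{-\pi|x|/2}}{\sinh(\pi|x|/2)}dx$. Its free analogue $\tilde\phi_S$ has Voiculescu transform $$V_{\tilde\phi_S}(it)=-it^2\int_0^\infty[\log\sinh s-\log s]e^{-ts}ds=i\big[t\psi(t/2)-t\ln(t/2)+1\big],\qquad t>0.$$
   Context: $\psi=\Gamma'/\Gamma$ denotes the digamma function. For an infinitely divisible characteristic function $\phi$ with Khintchine exponent $\log\phi$ (continuous logarithm, $\log\phi(0)=0$), its free analogue $\tilde\phi$ is the $\boxplus$-infinitely divisible probability measure whose Voiculescu transform satisfies $V_{\tilde\phi}(it)=it^2\int_0^\infty\overline{\log\phi(s)}e^{-ts}ds$, $t>0$; if $\phi$ has Khintchine pair $[0,m]$ with $m$ symmetric, this equals $-it\int_{\mathbb{R}}\frac{1+x^2}{t^2+x^2}m(dx)$. *)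

theory Defs
  imports "HOL-Analysis.Analysis"
begin

text \<open>Voiculescu transform of the free analogue of an infinitely divisible
characteristic function, evaluated at the point i t (t > 0), given the
Khintchine exponent L = log phi (continuous logarithm, L 0 = 0):
  V(i t) = i t^2 * integral over (0,infinity) of conj(L s) e^(-t s) ds.\<close>
definition free_analogue_V_at_it :: "(real \<Rightarrow> complex) \<Rightarrow> real \<Rightarrow> complex" where
  "free_analogue_V_at_it L t =
     \<i> * complex_of_real (t ^ 2) *
       (LINT s:{0<..}|lborel. cnj (L s) * complex_of_real (exp (- t * s)))"

text \<open>Khintchine exponent of the hyperbolic-sine characteristic function
phi_S(s) = s / sinh s (positive real, so the continuous logarithm is ln),
with phi_S(0) = 1.\<close>
definition log_phi_S :: "real \<Rightarrow> complex" where
  "log_phi_S s = (if s = 0 then 0 else complex_of_real (ln (s / sinh s)))"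

end

theory Submission
  imports Defs
begin

lemma hi_to_lborel:
  fixes f :: "real \<Rightarrow> real" and S :: "real set"
  assumes meas: "(\<lambda>x. indicator S x * f x) \<in> borel_measurable borel"
    and nonneg: "\<And>x. x \<in> S \<Longrightarrow> 0 \<le> f x" and I: "(f has_integral I) S"
  shows "set_integrable lborel S f" "(LINT x:S|lborel. f x) = I"
proof -
  have nn: "integral\<^sup>N lborel (\<lambda>x. indicator S x * f x) = I"
    by (rule nn_integral_has_integral_lebesgue[OF nonneg I])
  have "integrable lborel (\<lambda>x. indicator S x * f x)"
    by (rule integrableI_nn_integral_finite[OF _ _ nn]) (use meas nonneg in \<open>auto simp: indicator_def\<close>)
  then show si: "set_integrable lborel S f"
    unfolding set_integrable_def by simp
  show "(LINT x:S|lborel. f x) = I"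
    using set_borel_integral_eq_integral(2)[OF si] I by (simp add: integral_unique)
qed

lemma Gamma1_Ioi:
  fixes a :: real assumes a: "a > 0"
  shows "set_integrable lborel {0<..} (\<lambda>s. s powr (a - 1) * exp (- s))"
        "(LINT s:{0<..}|lborel. s powr (a - 1) * exp (- s)) = Gamma a"
proof -
  have "((\<lambda>t. t powr (a - 1) / exp t) has_integral Gamma a) {0..}"
    by (rule Gamma_integral_real[OF a])
  then have "((\<lambda>t. t powr (a - 1) * exp (- t)) has_integral Gamma a) {0..}"
    by (simp add: exp_minus field_simps)
  then have H: "((\<lambda>t. t powr (a - 1) * exp (- t)) has_integral Gamma a) {0<..}"
    by (subst has_integral_spike_set_eq[of "{0<..}" "{0..}"]) (auto intro!: negligible_subset[OF negligible_empty])
  have M: "(\<lambda>x. indicator {0<..} x * (x powr (a - 1) * exp (- x))) \<in> borel_measurable borel"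
    by measurable
  show "set_integrable lborel {0<..} (\<lambda>s. s powr (a - 1) * exp (- s))"
    "(LINT s:{0<..}|lborel. s powr (a - 1) * exp (- s)) = Gamma a"
    using hi_to_lborel[OF M _ H] by auto
qed

lemma scale_Ioi:
  fixes f :: "real \<Rightarrow> real" and c :: real
  assumes c: "c > 0" and f: "set_integrable lborel {0<..} f"
  shows "set_integrable lborel {0<..} (\<lambda>x. f (c * x))"
        "(LINT x:{0<..}|lborel. f (c * x)) = (LINT x:{0<..}|lborel. f x) / c"
proof -
  define g where "g x = indicator {0<..} x * f x" for x
  have g: "integrable lborel g" using f unfolding set_integrable_def g_def by simp
  have eq: "g (0 + c * x) = indicator {0<..} x * f (c * x)" for x
    using c by (auto simp: g_def indicator_def zero_less_mult_iff)
  have "integrable lborel (\<lambda>x. g (0 + c * x))"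
    using lborel_integrable_real_affine[OF g, of c 0] c by simp
  then show "set_integrable lborel {0<..} (\<lambda>x. f (c * x))"
    unfolding set_integrable_def eq by simp
  have "integral\<^sup>L lborel g = \<bar>c\<bar> *\<^sub>R integral\<^sup>L lborel (\<lambda>x. g (0 + c * x))"
    using lborel_integral_real_affine[of c g 0] c by simp
  then show "(LINT x:{0<..}|lborel. f (c * x)) = (LINT x:{0<..}|lborel. f x) / c"
  proof -
    have "(LINT x:{0<..}|lborel. f x) = integral\<^sup>L lborel g"
      unfolding set_lebesgue_integral_def g_def by simp
    also have "\<dots> = c * (LINT x:{0<..}|lborel. f (c * x))"
      using \<open>integral\<^sup>L lborel g = _\<close> c unfolding set_lebesgue_integral_def eq by simp
    finally show ?thesis using c by simp
  qed
qed

lemma GammaT_Ioi: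
  fixes a t :: real assumes a: "a > 0" and t: "t > 0"
  shows "set_integrable lborel {0<..} (\<lambda>s. s powr (a - 1) * exp (- t * s))"
        "(LINT s:{0<..}|lborel. s powr (a - 1) * exp (- t * s)) = Gamma a / t powr a"
proof -
  note G = Gamma1_Ioi[OF a]
  have eq: "(t * x) powr (a - 1) * exp (- (t * x)) = t powr (a - 1) * (x powr (a - 1) * exp (- t * x))"
    if "x > 0" for x using that t by (simp add: powr_mult)
  note S = scale_Ioi[OF t G(1)]
  have S1: "set_integrable lborel {0<..} (\<lambda>x. t powr (a - 1) * (x powr (a - 1) * exp (- t * x)))"
    using S(1) by (rule iffD1[OF set_integrable_cong, rotated 3]) (auto simp: eq)
  then show "set_integrable lborel {0<..} (\<lambda>s. s powr (a - 1) * exp (- t * s))"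
    using t by simp
  have "(LINT x:{0<..}|lborel. t powr (a - 1) * (x powr (a - 1) * exp (- t * x))) = Gamma a / t"
  proof -
    have "(LINT x:{0<..}|lborel. t powr (a - 1) * (x powr (a - 1) * exp (- t * x))) =
       (LINT x:{0<..}|lborel. (t * x) powr (a - 1) * exp (- (t * x)))"
      by (rule set_lebesgue_integral_cong) (auto simp: eq)
    then show ?thesis using S(2) G(2) by simp
  qed
  then have "t powr (a - 1) * (LINT x:{0<..}|lborel. x powr (a - 1) * exp (- t * x)) = Gamma a / t"
    by simp
  moreover have "t powr a = t * t powr (a - 1)" using t by (simp add: powr_diff)
  ultimately show "(LINT s:{0<..}|lborel. s powr (a - 1) * exp (- t * s)) = Gamma a / t powr a"
    using t by (simp add: field_simps)
qed

lemma exp_Ioi: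
  fixes t :: real assumes t: "t > 0"
  shows "set_integrable lborel {0<..} (\<lambda>s. exp (- t * s))"
        "(LINT s:{0<..}|lborel. exp (- t * s)) = 1 / t"
proof -
  note G = GammaT_Ioi[OF zero_less_one t]
  have e: "x powr (1 - 1) * exp (- t * x) = exp (- t * x)" if "x \<in> {0<..}" for x
    using that by simp
  show "set_integrable lborel {0<..} (\<lambda>s. exp (- t * s))"
    by (rule iffD1[OF set_integrable_cong[OF refl refl e] G(1)]) simp
  have "(LINT s:{0<..}|lborel. exp (- t * s)) = (LINT s:{0<..}|lborel. s powr (1 - 1) * exp (- t * s))"
    by (rule set_lebesgue_integral_cong) (auto simp: e)
  then show "(LINT s:{0<..}|lborel. exp (- t * s)) = 1 / t"
    using G(2) t by simp
qed

lemma sexp_Ioi: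
  fixes t :: real assumes t: "t > 0"
  shows "set_integrable lborel {0<..} (\<lambda>s. s * exp (- t * s))"
        "(LINT s:{0<..}|lborel. s * exp (- t * s)) = 1 / t ^ 2"
proof -
  have two: "(2::real) > 0" by simp
  note G = GammaT_Ioi[OF two t]
  have e: "x powr (2 - 1) * exp (- t * x) = x * exp (- t * x)" if "x \<in> {0<..}" for x
    using that by simp
  show "set_integrable lborel {0<..} (\<lambda>s. s * exp (- t * s))"
    by (rule iffD1[OF set_integrable_cong[OF refl refl e] G(1)]) simp
  have "(LINT s:{0<..}|lborel. s * exp (- t * s)) = (LINT s:{0<..}|lborel. s powr (2 - 1) * exp (- t * s))"
    by (rule set_lebesgue_integral_cong) (auto simp: e)
  then show "(LINT s:{0<..}|lborel. s * exp (- t * s)) = 1 / t ^ 2"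
    using G(2) t by (simp add: Gamma_numeral)
qed

lemma deriv_seq:
  fixes f :: "real \<Rightarrow> real"
  assumes "(f has_field_derivative D) (at x)"
  shows "(\<lambda>n. (f (x + inverse (real (Suc n))) - f x) / inverse (real (Suc n))) \<longlonglongrightarrow> D"
proof -
  have L: "((\<lambda>y. (f y - f x) / (y - x)) \<longlongrightarrow> D) (at x)"
    using assms by (simp add: has_field_derivative_iff)
  have S: "(\<lambda>n. x + inverse (real (Suc n))) \<longlonglongrightarrow> x"
    using tendsto_add[OF tendsto_const[of x] LIMSEQ_inverse_real_of_nat] by simp
  have "(\<lambda>n. (f (x + inverse (real (Suc n))) - f x) / (x + inverse (real (Suc n)) - x)) \<longlonglongrightarrow> D"
  proof -
    from L have A: "\<forall>S. (\<forall>n. S n \<noteq> x) \<and> S \<longlonglongrightarrow> x \<longrightarrow> (\<lambda>n. (f (S n) - f x) / (S n - x)) \<longlonglongrightarrow> D"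
      unfolding LIMSEQ_SEQ_conv[symmetric] .
    have B: "\<forall>n. x + inverse (real (Suc n)) \<noteq> x" by simp
    show ?thesis using spec[OF A, of "\<lambda>n. x + inverse (real (Suc n))"] B S by simp
  qed
  then show ?thesis by simp
qed

lemma powr_bound:
  fixes x h :: real assumes x: "x > 0" and h: "0 < h" "h \<le> 1"
  shows "\<bar>(x powr h - 1) / h\<bar> \<le> \<bar>ln x\<bar> * (1 + x)"
proof -
  have xp: "x powr h = exp (h * ln x)" using x by (simp add: powr_def)
  have "\<bar>x powr h - 1\<bar> \<le> h * (\<bar>ln x\<bar> * (1 + x))"
  proof (cases "x \<ge> 1")
    case True
    define y where "y = h * ln x"
    have y0: "y \<ge> 0" using True h by (simp add: y_def)
    have "1 - y \<le> exp (- y)" using exp_ge_add_one_self[of "-y"] by simp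
    then have "exp y - 1 \<le> y * exp y"
      using y0 by (simp add: exp_minus field_simps)
    moreover have "exp y \<le> x"
    proof -
      have "y \<le> ln x" using h True by (simp add: y_def mult_left_le_one_le)
      then show ?thesis using x by (metis exp_le_cancel_iff exp_ln)
    qed
    moreover have "exp y \<ge> 1" using y0 by simp
    ultimately have "\<bar>exp y - 1\<bar> \<le> y * x"
      using y0 by (smt (verit) mult_left_mono)
    also have "\<dots> \<le> h * (\<bar>ln x\<bar> * (1 + x))"
      using True h by (simp add: y_def mult_left_mono mult_right_mono)
    finally show ?thesis by (simp add: xp y_def)
  next
    case False
    define y where "y = h * ln x"
    have y0: "y \<le> 0" using False h x by (simp add: y_def mult_nonneg_nonpos)
    have "1 + y \<le> exp y" by (rule exp_ge_add_one_self)
    moreover have "exp y \<le> 1" using y0 by simp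
    ultimately have "\<bar>exp y - 1\<bar> \<le> - y" by linarith
    also have "\<dots> = h * \<bar>ln x\<bar>"
    proof -
      have "ln x \<le> 0" using False x by simp
      then show ?thesis by (simp add: y_def abs_of_nonpos)
    qed
    also have "\<dots> \<le> h * (\<bar>ln x\<bar> * (1 + x))"
      using h x by (intro mult_left_mono) (auto simp: mult_le_cancel_left1)
    finally show ?thesis by (simp add: xp y_def)
  qed
  then show ?thesis using h by (simp add: abs_divide divide_le_eq mult.commute)
qed

lemma ln_bound:
  fixes x :: real assumes x: "x > 0"
  shows "\<bar>ln x\<bar> \<le> 2 * x powr (-1/2) + x"
proof (cases "x \<ge> 1")
  case True
  then show ?thesis using ln_le_minus_one[of x] x by (simp add: add_increasing)
next
  case False
  define y where "y = x powr (-1/2)"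
  have yp: "y > 0" using x by (simp add: y_def)
  have "ln y = - ln x / 2" using x by (simp add: y_def ln_powr)
  moreover have "ln y \<le> y - 1" using ln_le_minus_one[OF yp] .
  moreover have "ln x < 0" using False x by simp
  ultimately show ?thesis using x by (simp add: y_def)
qed

lemma lnexp1:
  shows "set_integrable lborel {0<..} (\<lambda>s::real. ln s * exp (- s))"
        "(LINT s:{0<..}|lborel. ln s * exp (- s)) = - (euler_mascheroni :: real)"
proof -
  define h where "h n = inverse (real (Suc n))" for n
  define sn where "sn n x = indicator {0<..} x * ((x powr h n - 1) / h n * exp (- x))" for n and x :: real
  define f where "f x = indicator {0<..} x * (ln x * exp (- x))" for x :: real
  define W where "W x = 2 * (x powr (1/2 - 1) * exp (- x)) + 2 * (x powr (3/2 - 1) * exp (- x))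
      + (x powr (2 - 1) * exp (- x) + x powr (3 - 1) * exp (- x))" for x :: real
  define w where "w x = indicator {0<..} x * W x" for x :: real
  have hpos: "0 < h n" "h n \<le> 1" for n by (auto simp: h_def field_simps)
  have WI: "set_integrable lborel {0<..} W"
    unfolding W_def
    by (intro set_integral_add set_integrable_mult_right Gamma1_Ioi) auto
  have wI: "integrable lborel w"
    using WI unfolding set_integrable_def w_def by simp
  have fM: "f \<in> borel_measurable lborel" unfolding f_def by measurable
  have sM: "sn n \<in> borel_measurable lborel" for n unfolding sn_def by measurable
  have bound: "norm (sn n x) \<le> w x" for n x
  proof (cases "x > 0")
    case True
    have "\<bar>(x powr h n - 1) / h n\<bar> \<le> \<bar>ln x\<bar> * (1 + x)"
      by (rule powr_bound[OF True hpos])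
    also have "\<dots> \<le> (2 * x powr (-1/2) + x) * (1 + x)"
      using ln_bound[OF True] True by (intro mult_right_mono) auto
    also have "\<dots> = 2 * x powr (1/2 - 1) + 2 * x powr (3/2 - 1) + (x powr (2 - 1) + x powr (3 - 1))"
    proof -
      have "x powr (-1/2) * x = x powr (-1/2) * x powr 1" using True by simp
      also have "\<dots> = x powr (-1/2 + 1)" by (rule powr_add[symmetric])
      also have "\<dots> = x powr (3/2 - 1)" by simp
      finally have "x powr (-1/2) * x = x powr (3/2 - 1)" .
      moreover have "x powr (3 - 1) = x * x" using True by (simp add: power2_eq_square)
      moreover have "x powr (-1/2) = x powr (1/2 - 1)" by simp
      ultimately show ?thesis using True by (simp add: algebra_simps)
    qed
    finally have "\<bar>(x powr h n - 1) / h n\<bar> * exp (- x) \<le>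
       (2 * x powr (1/2 - 1) + 2 * x powr (3/2 - 1) + (x powr (2 - 1) + x powr (3 - 1))) * exp (- x)"
      by (intro mult_right_mono) auto
    moreover have "norm (sn n x) = \<bar>(x powr h n - 1) / h n\<bar> * exp (- x)"
      using True by (simp add: sn_def abs_mult)
    moreover have "w x = (2 * x powr (1/2 - 1) + 2 * x powr (3/2 - 1) + (x powr (2 - 1) + x powr (3 - 1))) * exp (- x)"
      using True by (simp add: w_def W_def algebra_simps)
    ultimately show ?thesis by simp
  qed (simp add: sn_def w_def)
  have lim: "(\<lambda>n. sn n x) \<longlonglongrightarrow> f x" for x
  proof (cases "x > 0")
    case True
    have "((\<lambda>y. exp (y * ln x)) has_field_derivative ln x) (at 0)"
      by (auto intro!: derivative_eq_intros)
    from deriv_seq[OF this]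
    have "(\<lambda>n. (x powr h n - 1) / h n) \<longlonglongrightarrow> ln x"
      using True by (simp add: powr_def h_def)
    then have "(\<lambda>n. (x powr h n - 1) / h n * exp (- x)) \<longlonglongrightarrow> ln x * exp (- x)"
      by (rule tendsto_mult_right)
    then show ?thesis using True by (simp add: sn_def f_def)
  qed (simp add: sn_def f_def)
  note DC = integrable_dominated_convergence[OF fM sM wI AE_I2[OF lim] AE_I2[OF bound]]
       integral_dominated_convergence[OF fM sM wI AE_I2[OF lim] AE_I2[OF bound]]
  have int_sn: "integral\<^sup>L lborel (sn n) = (Gamma (1 + h n) - Gamma 1) / h n" for n
  proof -
    have "integral\<^sup>L lborel (sn n) = (LINT x:{0<..}|lborel. (x powr h n - 1) / h n * exp (- x))"
      unfolding sn_def set_lebesgue_integral_def by simp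
    also have "\<dots> = (LINT x:{0<..}|lborel. (1 / h n) * (x powr ((1 + h n) - 1) * exp (- x) - x powr (1 - 1) * exp (- x)))"
      by (rule set_lebesgue_integral_cong) (auto simp: field_simps)
    also have "\<dots> = (1 / h n) * (Gamma (1 + h n) - Gamma 1)"
    proof -
      have p: "0 < 1 + h n" using hpos[of n] by simp
      show ?thesis
        using Gamma1_Ioi[OF p] Gamma1_Ioi[OF zero_less_one]
        by (subst set_integral_mult_right, subst set_integral_diff) auto
    qed
    finally show ?thesis by simp
  qed
  have "(Gamma has_field_derivative Gamma 1 * Digamma 1) (at (1::real))"
    by (rule has_field_derivative_Gamma) (auto simp: nonpos_Ints_def)
  from deriv_seq[OF this]
  have "(\<lambda>n. integral\<^sup>L lborel (sn n)) \<longlonglongrightarrow> - euler_mascheroni"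
    by (simp add: int_sn h_def)
  with DC(2) have fint: "integral\<^sup>L lborel f = - euler_mascheroni"
    using LIMSEQ_unique by blast
  show "set_integrable lborel {0<..} (\<lambda>s::real. ln s * exp (- s))"
  proof -
    have "(\<lambda>x. indicator {0<..} x *\<^sub>R (ln x * exp (- x))) = f" by (simp add: f_def fun_eq_iff)
    then show ?thesis using DC(1) unfolding set_integrable_def by simp
  qed
  show "(LINT s:{0<..}|lborel. ln s * exp (- s)) = - (euler_mascheroni :: real)"
    using fint unfolding set_lebesgue_integral_def f_def by simp
qed

lemma lnexpT:
  fixes t :: real assumes t: "t > 0"
  shows "set_integrable lborel {0<..} (\<lambda>s. ln s * exp (- t * s))"
        "(LINT s:{0<..}|lborel. ln s * exp (- t * s)) = - (euler_mascheroni + ln t) / t"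
proof -
  note S = scale_Ioi[OF t lnexp1(1)]
  note E = exp_Ioi[OF t]
  have e: "ln x * exp (- t * x) = ln (t * x) * exp (- (t * x)) - ln t * exp (- t * x)"
    if "x \<in> {0<..}" for x
    using that t by (simp add: ln_mult algebra_simps)
  have I: "set_integrable lborel {0<..} (\<lambda>x. ln (t * x) * exp (- (t * x)) - ln t * exp (- t * x))"
    using S(1) E(1) by (intro set_integral_diff set_integrable_mult_right) auto
  show "set_integrable lborel {0<..} (\<lambda>s. ln s * exp (- t * s))"
    by (rule iffD2[OF set_integrable_cong[OF refl refl e] I])
  have "(LINT s:{0<..}|lborel. ln s * exp (- t * s)) =
      (LINT x:{0<..}|lborel. ln (t * x) * exp (- (t * x)) - ln t * exp (- t * x))"
    apply (rule set_lebesgue_integral_cong)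
     apply simp
    using e by blast
  also have "\<dots> = - euler_mascheroni / t - ln t * (1 / t)"
    using S E lnexp1(2) by (subst set_integral_diff) auto
  also have "\<dots> = - (euler_mascheroni + ln t) / t" using t by (simp add: field_simps)
  finally show "(LINT s:{0<..}|lborel. ln s * exp (- t * s)) = - (euler_mascheroni + ln t) / t" .
qed

lemma term_int:
  fixes t :: real assumes t: "t > 0"
  shows "integrable lborel (\<lambda>x. indicator {0<..} x * (exp (-2 * x) ^ n / real n * exp (- t * x)))"
        "(LINT x|lborel. indicator {0<..} x * (exp (-2 * x) ^ n / real n * exp (- t * x)))
            = 1 / (real n * (t + 2 * real n))"
proof -
  have tn: "t + 2 * real n > 0" using t by simp
  note E = exp_Ioi[OF tn]
  have e: "indicator {0<..} x * (exp (-2 * x) ^ n / real n * exp (- t * x))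
     = (1 / real n) * (indicator {0<..} x *\<^sub>R exp (- (t + 2 * real n) * x))" for x
  proof -
    have "exp (-2 * x) ^ n * exp (- t * x) = exp (- (t + 2 * real n) * x)"
      by (simp add: exp_of_nat_mult[symmetric] exp_add[symmetric] algebra_simps)
    then show ?thesis by (simp add: field_simps)
  qed
  show "integrable lborel (\<lambda>x. indicator {0<..} x * (exp (-2 * x) ^ n / real n * exp (- t * x)))"
    unfolding e using E(1) unfolding set_integrable_def by simp
  show "(LINT x|lborel. indicator {0<..} x * (exp (-2 * x) ^ n / real n * exp (- t * x)))
            = 1 / (real n * (t + 2 * real n))"
    unfolding e using E(2) unfolding set_lebesgue_integral_def by simp
qed

lemma digamma_sum:
  fixes t :: real assumes t: "t > 0"
  shows "(\<lambda>n. 1 / (real n * (t + 2 * real n))) sums ((Digamma (t/2 + 1) + euler_mascheroni) / t)"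
proof -
  define z where "z = t/2 + 1"
  have z: "z \<noteq> 0" using t by (simp add: z_def)
  have "(\<lambda>k. inverse (of_nat (Suc k)) - inverse (z + of_nat k)) sums (Digamma z + euler_mascheroni)"
    using summable_Digamma[OF z] by (simp add: Digamma_def summable_sums)
  moreover have "inverse (of_nat (Suc k)) - inverse (z + of_nat k) = t * (1 / (real (Suc k) * (t + 2 * real (Suc k))))" for k
    using t by (simp add: z_def field_simps)
  ultimately have "(\<lambda>k. t * (1 / (real (Suc k) * (t + 2 * real (Suc k))))) sums (Digamma z + euler_mascheroni)"
    by simp
  then have "(\<lambda>k. t * (1 / (real (Suc k) * (t + 2 * real (Suc k)))) / t) sums ((Digamma z + euler_mascheroni) / t)"
    by (rule sums_divide)
  then have "(\<lambda>k. 1 / (real (Suc k) * (t + 2 * real (Suc k)))) sums ((Digamma z + euler_mascheroni) / t)"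
    using t by simp
  then show ?thesis
    by (subst (asm) sums_Suc_iff) (simp add: z_def)
qed

lemma lnser:
  fixes t :: real assumes t: "t > 0"
  shows "set_integrable lborel {0<..} (\<lambda>s. - ln (1 - exp (-2 * s)) * exp (- t * s))"
        "(LINT s:{0<..}|lborel. - ln (1 - exp (-2 * s)) * exp (- t * s)) = (Digamma (t/2 + 1) + euler_mascheroni) / t"
proof -
  define g where "g n x = indicator {0<..} x * (exp (-2 * x) ^ n / real n * exp (- t * x))" for n and x :: real
  define F where "F N x = (\<Sum>n<N. g n x)" for N x
  define u where "u x = indicator {0<..} x * (- ln (1 - exp (-2 * x)) * exp (- t * x))" for x :: real
  have gI: "integrable lborel (g n)" for n unfolding g_def using term_int(1)[OF t] .
  have gV: "integral\<^sup>L lborel (g n) = 1 / (real n * (t + 2 * real n))" for n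
    unfolding g_def using term_int(2)[OF t] .
  have gpos: "0 \<le> g n x" for n x by (simp add: g_def)
  have FI: "integrable lborel (F N)" for N unfolding F_def using gI by auto
  have mono: "mono (\<lambda>N. F N x)" for x
    unfolding F_def by (rule incseq_sumI) (rule gpos)
  have pos: "0 \<le> F N x" for N x unfolding F_def by (intro sum_nonneg gpos)
  have lim: "(\<lambda>N. F N x) \<longlonglongrightarrow> u x" for x
  proof (cases "x > 0")
    case True
    have "\<bar>- exp (-2 * x)\<bar> < 1" using True by simp
    from ln_series'[OF this]
    have "(\<lambda>n. - (exp (-2 * x) ^ n) / real n) sums ln (1 - exp (-2 * x))" by simp
    from sums_mult2[OF sums_minus[OF this], of "exp (- t * x)"]
    have "(\<lambda>n. exp (-2 * x) ^ n / real n * exp (- t * x)) sums (- ln (1 - exp (-2 * x)) * exp (- t * x))"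
      by simp
    then show ?thesis using True unfolding sums_def F_def g_def u_def by simp
  qed (simp add: F_def g_def u_def)
  have ilim: "(\<lambda>N. integral\<^sup>L lborel (F N)) \<longlonglongrightarrow> (Digamma (t/2 + 1) + euler_mascheroni) / t"
  proof -
    have "integral\<^sup>L lborel (F N) = (\<Sum>n<N. 1 / (real n * (t + 2 * real n)))" for N
      unfolding F_def by (simp add: integral_sum gI gV)
    then show ?thesis using digamma_sum[OF t] unfolding sums_def by simp
  qed
  have uM: "u \<in> borel_measurable lborel" unfolding u_def by measurable
  note MC = integral_monotone_convergence_nonneg[OF FI AE_I2[OF mono] AE_I2[OF pos] AE_I2[OF lim] ilim uM]
  have ueq: "(\<lambda>x. indicator {0<..} x *\<^sub>R (- ln (1 - exp (-2 * x)) * exp (- t * x))) = u"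
    by (simp add: u_def fun_eq_iff)
  show "set_integrable lborel {0<..} (\<lambda>s. - ln (1 - exp (-2 * s)) * exp (- t * s))"
    unfolding set_integrable_def ueq by (rule MC(1))
  show "(LINT s:{0<..}|lborel. - ln (1 - exp (-2 * s)) * exp (- t * s)) = (Digamma (t/2 + 1) + euler_mascheroni) / t"
    unfolding set_lebesgue_integral_def ueq by (rule MC(2))
qed

lemma ln_sinh_eq:
  fixes s :: real assumes s: "s > 0"
  shows "ln (sinh s) - ln s = s - ln 2 - (- ln (1 - exp (-2 * s))) - ln s"
proof -
  have e1: "exp (-2 * s) < 1" using s by simp
  have sh: "sinh s = exp s * (1 - exp (-2 * s)) / 2"
    by (simp add: sinh_def algebra_simps exp_add[symmetric])
  have pos: "exp s * (1 - exp (-2 * s)) > 0" using e1 by simp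
  have "ln (sinh s) = ln (exp s * (1 - exp (-2 * s)) / 2)" by (simp only: sh)
  also have "\<dots> = ln (exp s * (1 - exp (-2 * s))) - ln 2"
    using pos by (rule ln_divide_pos) simp
  also have "\<dots> = s + ln (1 - exp (-2 * s)) - ln 2"
    using e1 by (simp add: ln_mult)
  finally show ?thesis by simp
qed

theorem corollary3:
  fixes t :: real
  assumes "t > 0"
  shows "set_integrable lborel {0<..} (\<lambda>s. (ln (sinh s) - ln s) * exp (- t * s))
    \<and> free_analogue_V_at_it log_phi_S t
        = - \<i> * complex_of_real (t ^ 2 *
            (LINT s:{0<..}|lborel. (ln (sinh s) - ln s) * exp (- t * s)))
    \<and> - \<i> * complex_of_real (t ^ 2 *
            (LINT s:{0<..}|lborel. (ln (sinh s) - ln s) * exp (- t * s)))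
        = \<i> * complex_of_real (t * Digamma (t / 2) - t * ln (t / 2) + 1)"
proof -
  note t = assms
  define G where "G s = (ln (sinh s) - ln s) * exp (- t * s)" for s :: real
  define H where "H s = s * exp (- t * s) - ln 2 * exp (- t * s)
      - (- ln (1 - exp (-2 * s)) * exp (- t * s)) - ln s * exp (- t * s)" for s :: real
  have GH: "G s = H s" if "s \<in> {0<..}" for s
    using that unfolding G_def H_def by (subst ln_sinh_eq) (auto simp: algebra_simps)
  note A = sexp_Ioi[OF t] and B = exp_Ioi[OF t] and C = lnser[OF t] and D = lnexpT[OF t]
  have HI: "set_integrable lborel {0<..} H"
    unfolding H_def using A B C D
    by (intro set_integral_diff set_integrable_mult_right) auto
  have GI: "set_integrable lborel {0<..} G"
    by (rule iffD2[OF set_integrable_cong[OF refl refl GH] HI])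
  have "(LINT s:{0<..}|lborel. G s) = (LINT s:{0<..}|lborel. H s)"
    by (rule set_lebesgue_integral_cong) (auto simp: GH)
  also have "\<dots> = 1 / t ^ 2 - ln 2 * (1 / t) - (Digamma (t/2 + 1) + euler_mascheroni) / t
      - (- (euler_mascheroni + ln t) / t)"
  proof -
    have B2: "set_integrable lborel {0<..} (\<lambda>s. ln 2 * exp (- t * s))"
      using B(1) by (intro set_integrable_mult_right) auto
    have I1: "set_integrable lborel {0<..} (\<lambda>s. s * exp (- t * s) - ln 2 * exp (- t * s))"
      using A(1) B2 by (rule set_integral_diff(1))
    have I2: "set_integrable lborel {0<..} (\<lambda>s. s * exp (- t * s) - ln 2 * exp (- t * s)
          - (- ln (1 - exp (-2 * s)) * exp (- t * s)))"
      using I1 C(1) by (rule set_integral_diff(1))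
    have "(LINT s:{0<..}|lborel. H s) = (LINT s:{0<..}|lborel. s * exp (- t * s) - ln 2 * exp (- t * s)
          - (- ln (1 - exp (-2 * s)) * exp (- t * s))) - (LINT s:{0<..}|lborel. ln s * exp (- t * s))"
      unfolding H_def using I2 D(1) by (rule set_integral_diff(2))
    also have "(LINT s:{0<..}|lborel. s * exp (- t * s) - ln 2 * exp (- t * s)
          - (- ln (1 - exp (-2 * s)) * exp (- t * s))) = (LINT s:{0<..}|lborel. s * exp (- t * s) - ln 2 * exp (- t * s))
          - (LINT s:{0<..}|lborel. - ln (1 - exp (-2 * s)) * exp (- t * s))"
      using I1 C(1) by (rule set_integral_diff(2))
    also have "(LINT s:{0<..}|lborel. s * exp (- t * s) - ln 2 * exp (- t * s)) =
         (LINT s:{0<..}|lborel. s * exp (- t * s)) - (LINT s:{0<..}|lborel. ln 2 * exp (- t * s))"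
      using A(1) B2 by (rule set_integral_diff(2))
    also have "(LINT s:{0<..}|lborel. ln 2 * exp (- t * s)) = ln 2 * (LINT s:{0<..}|lborel. exp (- t * s))"
      by (rule set_integral_mult_right)
    finally show ?thesis using A(2) B(2) C(2) D(2) by simp
  qed
  finally have GV: "(LINT s:{0<..}|lborel. G s) = 1 / t ^ 2 - ln 2 * (1 / t) - (Digamma (t/2 + 1) + euler_mascheroni) / t
      - (- (euler_mascheroni + ln t) / t)" .
  have dig: "Digamma (t/2 + 1) = Digamma (t/2) + 1 / (t/2)"
    using t by (intro Digamma_plus1) simp
  have lnt: "ln (t / 2) = ln t - ln 2" using t by (simp add: ln_div)
  have val: "- (t ^ 2 * (LINT s:{0<..}|lborel. G s)) = t * Digamma (t / 2) - t * ln (t / 2) + 1"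
    unfolding GV dig lnt using t by (simp add: field_simps power2_eq_square)
  have cnjeq: "cnj (log_phi_S s) * complex_of_real (exp (- t * s)) = complex_of_real (- G s)"
    if "s \<in> {0<..}" for s
  proof -
    have "sinh s > 0" using that by simp
    then have eq: "ln (s / sinh s) = ln s - ln (sinh s)" using that by (simp add: ln_div)
    have "cnj (log_phi_S s) * complex_of_real (exp (- t * s)) = complex_of_real (ln (s / sinh s) * exp (- t * s))"
      using that by (simp add: log_phi_S_def)
    also have "\<dots> = complex_of_real (- G s)"
      unfolding eq G_def by (simp add: algebra_simps)
    finally show ?thesis .
  qed
  have "free_analogue_V_at_it log_phi_S t
     = \<i> * complex_of_real (t ^ 2) * (LINT s:{0<..}|lborel. complex_of_real (- G s))"
  proof -
    have "(LINT s:{0<..}|lborel. cnj (log_phi_S s) * complex_of_real (exp (- t * s)))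
        = (LINT s:{0<..}|lborel. complex_of_real (- G s))"
      by (rule set_lebesgue_integral_cong) (use cnjeq in auto)
    then show ?thesis unfolding free_analogue_V_at_it_def by simp
  qed
  also have "\<dots> = - \<i> * complex_of_real (t ^ 2 * (LINT s:{0<..}|lborel. G s))"
  proof -
    have "(LINT s:{0<..}|lborel. complex_of_real (- G s)) = complex_of_real (LINT s:{0<..}|lborel. - G s)"
      by (rule set_integral_complex_of_real)
    also have "(LINT s:{0<..}|lborel. - G s) = - (LINT s:{0<..}|lborel. G s)"
      by (rule set_integral_uminus[OF GI])
    finally show ?thesis by simp
  qed
  finally have V: "free_analogue_V_at_it log_phi_S t = - \<i> * complex_of_real (t ^ 2 * (LINT s:{0<..}|lborel. G s))" .
  have last: "- \<i> * complex_of_real (t ^ 2 * (LINT s:{0<..}|lborel. G s))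
      = \<i> * complex_of_real (t * Digamma (t / 2) - t * ln (t / 2) + 1)"
  proof -
    have "- \<i> * complex_of_real (t ^ 2 * (LINT s:{0<..}|lborel. G s))
        = \<i> * complex_of_real (- (t ^ 2 * (LINT s:{0<..}|lborel. G s)))" by simp
    then show ?thesis by (simp only: val)
  qed
  show ?thesis using GI V last unfolding G_def by simp
qed

end
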